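(* Let $K\subseteq\mathcal I_{int}$ be finite and let $A=(Q,\mathsf{init},2^{\Sigma\cup K\cup\{\mathsf{anch}\}},\delta,F)$ be an NFA whose language $L(A)$ consists of collapsed $K$-interval words over $\Sigma$. Then for every type $\mathsf{seq}$ over $K$, $L(A_{\mathsf{seq}})=\mathsf{Norm}(L(A)\cap W_{\mathsf{seq}})$. Consequently $\bigcup_{\mathsf{seq}}L(A_{\mathsf{seq}})=\mathsf{Norm}(L(A))$, the union ranging over all types over $K$.
   Context: Fix a finite set $\Sigma$ of propositions; $\mathcal I_{int}$ is the set of open, half-open or closed real intervals with endpoints in $\mathbb Z\cup\{-\infty,\infty\}$. Interval words: for finite $K\subseteq\mathcal I_{int}$ and a fresh symbol $\mathsf{anch}$, a $K$-interval word over $\Sigma$ is a finite word $w=a_1\cdots a_n$ with $a_j\subseteq\Sigma\cup K\cup\{\mathsf{anch}\}$ such that exactly one position $i$, denoted $\mathsf{anch}(w)$, has $\mathsf{anch}\in a_i$, and $a_i\subseteq\Sigma\cup\{\mathsf{anch}\}$ there. Position $j$ is $I$-time restricted iff $I\in a_j$. $w$ is collapsed iff every $a_j$ contains at most one element of $K$. $\mathsf{first}(w,I)$, $\mathsf{last}(w,I)$ are the least and greatest $I$-time restricted positions ($\bot$ if none). For a collapsed $K$-interval word $w$, $\mathsf{Norm}(w)$ is the $K$-interval word $b_1\cdots b_n$ with $b_j\cap(\Sigma\cup\{\mathsf{anch}\})=a_j\cap(\Sigma\cup\{\mathsf{anch}\})$ and, for $I\in K$, $I\in b_j$ iff $j\in\{\mathsf{first}(w,I),\mathsf{last}(w,I)\}$;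 for a set $L$ of words, $\mathsf{Norm}(L)=\{\mathsf{Norm}(w):w\in L\}$. Types: for a collapsed $K$-interval word $w$, let $\mathsf{Boundary}(w)$ be the set of positions that are $\mathsf{anch}(w)$ or equal to $\mathsf{first}(w,I)$ or $\mathsf{last}(w,I)$ for some $I\in K$; listing them as $p_1<\dots<p_m$, the type of $w$ is the word $c_1\cdots c_m$ over $K\cup\{\mathsf{anch}\}$ where $c_k$ is the unique element of $a_{p_k}\setminus\Sigma$. A type over $K$ is any word over $K\cup\{\mathsf{anch}\}$ arising this way (it contains $\mathsf{anch}$ exactly once and each $I\in K$ at most twice). $W_{\mathsf{seq}}$ is the set of collapsed $K$-interval words of type $\mathsf{seq}$. The automaton $A_{\mathsf{seq}}$: for $A$ as in the claim and a type $\mathsf{seq}=c_1\cdots c_m$, $A_{\mathsf{seq}}=(Q\times\{1,\dots,m+1\},(\mathsf{init},1),2^{\Sigma\cup K\cup\{\mathsf{anch}\}},\delta_{\mathsf{seq}},F\times\{m+1\})$ where, for $q\in Q$ and a letter $S$: for $1\le i\le m$, (i) if $c_i\in S$ then $\delta_{\mathsf{seq}}((q,i),S)=\delta(q,S)\times\{i+1\}$; (ii) if $c_i\notin S$ and $S\not\subseteq\Sigma$ then $\delta_{\mathsf{seq}}((q,i),S)=\emptyset$; (iii) if $S\subseteq\Sigma$ then $\delta_{\mathsf{seq}}((q,i),S)=\big(\delta(q,S)\cup\bigcup_{I'\in K_i}\delta(q,S\cup\{I'\})\big)\times\{i\}$, where $K_i=\{I'\in K:\exists i'<i\le i''\text{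 with }c_{i'}=c_{i''}=I'\}$; and $\delta_{\mathsf{seq}}((q,m+1),S)=\delta(q,S)\times\{m+1\}$ if $S\subseteq\Sigma$ and $\emptyset$ otherwise. *)

theory Defs
  imports Main "HOL.Real"
begin

datatype 'p sym = Prop 'p | Itv "real set" | Anch

text \<open>Lower/upper bounds: None = infinite endpoint; bool = closed endpoint.\<close>
fun lower_ok :: "int option \<Rightarrow> bool \<Rightarrow> real \<Rightarrow> bool" where
  "lower_ok None _ x = True"
| "lower_ok (Some a) c x = (if c then real_of_int a \<le> x else real_of_int a < x)"

fun upper_ok :: "int option \<Rightarrow> bool \<Rightarrow> real \<Rightarrow> bool" where
  "upper_ok None _ x = True"
| "upper_ok (Some b) c x = (if c then x \<le> real_of_int b else x < real_of_int b)"

definition I_int :: "real set set" where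
  "I_int = {S. \<exists>l u lc uc. S = {x. lower_ok l lc x \<and> upper_ok u uc x}}"

definition alphabet :: "'p set \<Rightarrow> real set set \<Rightarrow> 'p sym set set" where
  "alphabet Sig K = Pow (Prop ` Sig \<union> Itv ` K \<union> {Anch})"

fun reach :: "('q \<Rightarrow> 'a \<Rightarrow> 'q set) \<Rightarrow> 'q \<Rightarrow> 'a list \<Rightarrow> 'q set" where
  "reach \<delta> q [] = {q}"
| "reach \<delta> q (a # w) = (\<Union>q'\<in>\<delta> q a. reach \<delta> q' w)"

definition is_nfa :: "'q set \<Rightarrow> 'q \<Rightarrow> 'a set \<Rightarrow> ('q \<Rightarrow> 'a \<Rightarrow> 'q set) \<Rightarrow> 'q set \<Rightarrow> bool" where
  "is_nfa Q init Alph \<delta> F \<longleftrightarrow> finite Q \<and> init \<in> Q \<and> F \<subseteq> Q \<and> (\<forall>q\<in>Q. \<forall>S\<in>Alph. \<delta> q S \<subseteq> Q)"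

definition lang :: "'a set \<Rightarrow> 'q \<Rightarrow> ('q \<Rightarrow> 'a \<Rightarrow> 'q set) \<Rightarrow> 'q set \<Rightarrow> 'a list set" where
  "lang Alph init \<delta> F = {w. w \<in> lists Alph \<and> reach \<delta> init w \<inter> F \<noteq> {}}"

text \<open>Interval words (positions are 0-indexed list positions).\<close>
definition interval_word :: "'p set \<Rightarrow> real set set \<Rightarrow> 'p sym set list \<Rightarrow> bool" where
  "interval_word Sig K w \<longleftrightarrow>
     (\<forall>a\<in>set w. a \<subseteq> Prop ` Sig \<union> Itv ` K \<union> {Anch}) \<and>
     (\<exists>!i. i < length w \<and> Anch \<in> w ! i) \<and>
     (\<forall>i<length w. Anch \<in> w ! i \<longrightarrow> w ! i \<subseteq> Prop ` Sig \<union> {Anch})"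

definition anch_pos :: "'p sym set list \<Rightarrow> nat" where
  "anch_pos w = (THE i. i < length w \<and> Anch \<in> w ! i)"

definition collapsed :: "real set set \<Rightarrow> 'p sym set list \<Rightarrow> bool" where
  "collapsed K w \<longleftrightarrow> (\<forall>i<length w. \<forall>I\<in>K. \<forall>J\<in>K. Itv I \<in> w ! i \<and> Itv J \<in> w ! i \<longrightarrow> I = J)"

definition cw :: "'p set \<Rightarrow> real set set \<Rightarrow> 'p sym set list \<Rightarrow> bool" where
  "cw Sig K w \<longleftrightarrow> interval_word Sig K w \<and> collapsed K w"

definition first_pos :: "'p sym set list \<Rightarrow> real set \<Rightarrow> nat option" where
  "first_pos w I = (if \<exists>j<length w. Itv I \<in> w ! j
     then Some (LEAST j. j < length w \<and> Itv I \<in> w ! j) else None)"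

definition last_pos :: "'p sym set list \<Rightarrow> real set \<Rightarrow> nat option" where
  "last_pos w I = (if \<exists>j<length w. Itv I \<in> w ! j
     then Some (GREATEST j. j < length w \<and> Itv I \<in> w ! j) else None)"

definition Norm :: "'p set \<Rightarrow> real set set \<Rightarrow> 'p sym set list \<Rightarrow> 'p sym set list" where
  "Norm Sig K w = map (\<lambda>j. (w ! j \<inter> (Prop ` Sig \<union> {Anch})) \<union>
       {Itv I | I. I \<in> K \<and> (first_pos w I = Some j \<or> last_pos w I = Some j)}) [0..<length w]"

definition Boundary :: "real set set \<Rightarrow> 'p sym set list \<Rightarrow> nat set" where
  "Boundary K w = {anch_pos w} \<union> {j. \<exists>I\<in>K. first_pos w I = Some j \<or> last_pos w I = Some j}"

definition wtype :: "'p set \<Rightarrow> real set set \<Rightarrow> 'p sym set list \<Rightarrow> 'p sym list" where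
  "wtype Sig K w = map (\<lambda>p. THE c. c \<in> w ! p - Prop ` Sig) (sorted_list_of_set (Boundary K w))"

definition is_type :: "'p set \<Rightarrow> real set set \<Rightarrow> 'p sym list \<Rightarrow> bool" where
  "is_type Sig K seq \<longleftrightarrow> (\<exists>w. cw Sig K w \<and> wtype Sig K w = seq)"

definition W_seq :: "'p set \<Rightarrow> real set set \<Rightarrow> 'p sym list \<Rightarrow> 'p sym set list set" where
  "W_seq Sig K seq = {w. cw Sig K w \<and> wtype Sig K w = seq}"

text \<open>K_i, with 1-indexed positions i into seq = c_1 ... c_m.\<close>
definition Kset :: "real set set \<Rightarrow> 'p sym list \<Rightarrow> nat \<Rightarrow> real set set" where
  "Kset K seq i = {I\<in>K. \<exists>i' i''. 1 \<le> i' \<and> i' < i \<and> i \<le> i'' \<and> i'' \<le> length seq \<and>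
       seq ! (i' - 1) = Itv I \<and> seq ! (i'' - 1) = Itv I}"

definition delta_seq :: "'p set \<Rightarrow> real set set \<Rightarrow> ('q \<Rightarrow> 'p sym set \<Rightarrow> 'q set) \<Rightarrow> 'p sym list
     \<Rightarrow> 'q \<times> nat \<Rightarrow> 'p sym set \<Rightarrow> ('q \<times> nat) set" where
  "delta_seq Sig K \<delta> seq qi S = (case qi of (q, i) \<Rightarrow>
     (let m = length seq in
      if 1 \<le> i \<and> i \<le> m then
        (if seq ! (i - 1) \<in> S then \<delta> q S \<times> {i + 1}
         else if \<not> S \<subseteq> Prop ` Sig then {}
         else (\<delta> q S \<union> (\<Union>I\<in>Kset K seq i. \<delta> q (S \<union> {Itv I}))) \<times> {i})
      else if i = m + 1 then (if S \<subseteq> Prop ` Sig then \<delta> q S \<times> {m + 1} else {})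
      else {}))"

end

theory Submission imports Defs begin

lemma nth_sorted_card:
  fixes A :: "nat set"
  assumes "finite A" "p \<in> A"
  shows "sorted_list_of_set A ! card {q\<in>A. q<p} = p"
proof -
  define L where "L = sorted_list_of_set A"
  have sL: "sorted_wrt (<) L" and dL: "distinct L" and setL: "set L = A"
    using assms(1) by (auto simp: L_def strict_sorted_list_of_set)
  obtain k where k: "k < length L" "L!k = p" using assms(2) setL by (metis in_set_conv_nth)
  have "{q\<in>A. q<p} = (\<lambda>j. L!j) ` {..<k}"
  proof
    show "(\<lambda>j. L!j) ` {..<k} \<subseteq> {q\<in>A. q<p}"
    proof
      fix x assume "x \<in> (\<lambda>j. L!j) ` {..<k}"
      then obtain j where "j<k" "x = L!j" by auto
      then show "x \<in> {q\<in>A. q<p}" using k sL setL sorted_wrt_nth_less[OF sL, of j k] by auto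
    qed
    show "{q\<in>A. q<p} \<subseteq> (\<lambda>j. L!j) ` {..<k}"
    proof
      fix q assume q: "q \<in> {q\<in>A. q<p}"
      then obtain j where j: "j < length L" "L!j = q" using setL by (metis mem_Collect_eq in_set_conv_nth)
      have "j < k"
      proof (rule ccontr)
        assume "\<not> j < k"
        then have "k \<le> j" by simp
        then have "L!k \<le> L!j" using sorted_wrt_nth_less[OF sL, of k j] j k
          by (cases "k = j") auto
        then show False using q j k by simp
      qed
      then show "q \<in> (\<lambda>j. L!j) ` {..<k}" using j by auto
    qed
  qed
  moreover have "inj_on (\<lambda>j. L!j) {..<k}"
    using dL k(1) by (auto simp: inj_on_def nth_eq_iff_index_eq)
  ultimately have "card {q\<in>A. q<p} = k" by (simp add: card_image)
  then show ?thesis using k L_def by simp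
qed

definition letter :: "'p set \<Rightarrow> 'p sym set list \<Rightarrow> nat \<Rightarrow> 'p sym" where
  "letter Sig w p = (THE c. c \<in> w ! p - Prop ` Sig)"

lemma wtype_letter: "wtype Sig K w = map (letter Sig w) (sorted_list_of_set (Boundary K w))"
  by (simp add: wtype_def letter_def)

lemma cw_sub: "cw Sig K w \<Longrightarrow> p < length w \<Longrightarrow> w ! p \<subseteq> Prop ` Sig \<union> Itv ` K \<union> {Anch}"
  unfolding cw_def interval_word_def by (meson nth_mem)

lemma cw_uniq:
  assumes "cw Sig K w" "p < length w" "x \<in> w!p" "y \<in> w!p" "x \<notin> Prop ` Sig" "y \<notin> Prop ` Sig"
  shows "x = y"
proof -
  have s: "w ! p \<subseteq> Prop ` Sig \<union> Itv ` K \<union> {Anch}" using cw_sub assms(1,2) .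
  have a: "Anch \<in> w ! p \<Longrightarrow> w ! p \<subseteq> Prop ` Sig \<union> {Anch}"
    using assms(1,2) unfolding cw_def interval_word_def by blast
  have c: "\<And>I J. I \<in> K \<Longrightarrow> J \<in> K \<Longrightarrow> Itv I \<in> w!p \<Longrightarrow> Itv J \<in> w!p \<Longrightarrow> I = J"
    using assms(1,2) unfolding cw_def collapsed_def by blast
  have xs: "x = Anch \<or> (\<exists>I\<in>K. x = Itv I)" using s assms(3,5) by blast
  have ys: "y = Anch \<or> (\<exists>I\<in>K. y = Itv I)" using s assms(4,6) by blast
  show ?thesis
  proof (cases "x = Anch")
    case True
    then show ?thesis using ys a assms(3,4) by auto
  next
    case False
    then obtain I where I: "I \<in> K" "x = Itv I" using xs by blast
    show ?thesis
    proof (cases "y = Anch")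
      case True then show ?thesis using a assms(3,4) I by auto
    next
      case False
      then obtain J where J: "J \<in> K" "y = Itv J" using ys by blast
      then show ?thesis using c I assms(3,4) by auto
    qed
  qed
qed

lemma the_letter:
  assumes "cw Sig K w" "p < length w" "x \<in> w!p" "x \<notin> Prop ` Sig"
  shows "letter Sig w p = x"
  unfolding letter_def
  apply (rule the_equality)
  using assms cw_uniq[OF assms(1,2)] by auto

lemma anch_pos_prop:
  assumes "cw Sig K w"
  shows "anch_pos w < length w \<and> Anch \<in> w ! anch_pos w"
    and "p < length w \<Longrightarrow> Anch \<in> w!p \<Longrightarrow> p = anch_pos w"
proof -
  have ex: "\<exists>!i. i < length w \<and> Anch \<in> w ! i" using assms unfolding cw_def interval_word_def by blast
  show "anch_pos w < length w \<and> Anch \<in> w ! anch_pos w"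
    unfolding anch_pos_def using theI'[OF ex] .
  show "p < length w \<Longrightarrow> Anch \<in> w!p \<Longrightarrow> p = anch_pos w"
    unfolding anch_pos_def using the1_equality[OF ex] by auto
qed

lemma anch_no_itv:
  assumes "cw Sig K w" "p < length w" "Anch \<in> w!p" shows "Itv I \<notin> w!p"
  using assms unfolding cw_def interval_word_def by blast

lemma first_pos_some:
  assumes "first_pos w I = Some j"
  shows "j < length w" "Itv I \<in> w!j" "\<And>j'. j' < j \<Longrightarrow> Itv I \<notin> w!j'"
proof -
  have ex: "\<exists>j<length w. Itv I \<in> w ! j" using assms unfolding first_pos_def by (auto split: if_splits)
  have jd: "j = (LEAST j. j < length w \<and> Itv I \<in> w ! j)" using assms ex unfolding first_pos_def by auto
  show "j < length w" "Itv I \<in> w!j" using jd ex by (metis (mono_tags, lifting) LeastI)+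
  show "\<And>j'. j' < j \<Longrightarrow> Itv I \<notin> w!j'"
    using jd \<open>j < length w\<close> by (metis (mono_tags, lifting) dual_order.strict_trans not_less_Least)
qed

lemma first_pos_ex:
  assumes "j < length w" "Itv I \<in> w!j"
  shows "\<exists>f. first_pos w I = Some f \<and> f \<le> j"
proof -
  have ex: "\<exists>j<length w. Itv I \<in> w ! j" using assms by auto
  show ?thesis unfolding first_pos_def using ex assms by (auto intro: Least_le)
qed

lemma last_pos_some:
  assumes "last_pos w I = Some j"
  shows "j < length w" "Itv I \<in> w!j" "\<And>j'. j < j' \<Longrightarrow> j' < length w \<Longrightarrow> Itv I \<notin> w!j'"
proof -
  have ex: "\<exists>j<length w. Itv I \<in> w ! j" using assms unfolding last_pos_def by (auto split: if_splits)
  have jd: "j = (GREATEST j. j < length w \<and> Itv I \<in> w ! j)" using assms ex unfolding last_pos_def by auto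
  have b: "\<forall>y. y < length w \<and> Itv I \<in> w ! y \<longrightarrow> y \<le> length w" by auto
  show "j < length w" "Itv I \<in> w!j" using jd ex GreatestI_nat[where b="length w"] by (metis (mono_tags, lifting) less_imp_le)+
  show "\<And>j'. j < j' \<Longrightarrow> j' < length w \<Longrightarrow> Itv I \<notin> w!j'"
    using jd Greatest_le_nat[where b="length w"] by (metis (mono_tags, lifting) leD less_imp_le)
qed

lemma last_pos_ex:
  assumes "j < length w" "Itv I \<in> w!j"
  shows "\<exists>l. last_pos w I = Some l \<and> j \<le> l"
proof -
  have ex: "\<exists>j<length w. Itv I \<in> w ! j" using assms by auto
  show ?thesis unfolding last_pos_def using ex assms
    by (auto intro: Greatest_le_nat[where b="length w"])
qed

lemma Boundary_sub:
  assumes "cw Sig K w" shows "Boundary K w \<subseteq> {..<length w}"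
proof
  fix p assume "p \<in> Boundary K w"
  then have "p = anch_pos w \<or> (\<exists>I. first_pos w I = Some p \<or> last_pos w I = Some p)"
    unfolding Boundary_def by (simp, fast)
  then show "p \<in> {..<length w}"
  proof
    assume "p = anch_pos w" then show ?thesis using anch_pos_prop(1)[OF assms] by simp
  next
    assume "\<exists>I. first_pos w I = Some p \<or> last_pos w I = Some p"
    then obtain I where "first_pos w I = Some p \<or> last_pos w I = Some p" by blast
    then show ?thesis using first_pos_some(1)[of w I p] last_pos_some(1)[of w I p] by auto
  qed
qed

lemma Boundary_fin: "cw Sig K w \<Longrightarrow> finite (Boundary K w)"
  using Boundary_sub finite_subset[OF _ finite_lessThan] by metis

lemma bnd_cases:
  assumes "p \<in> Boundary K w"
  obtains "p = anch_pos w" | I where "I \<in> K" "first_pos w I = Some p \<or> last_pos w I = Some p"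
proof -
  have "p = anch_pos w \<or> (\<exists>I\<in>K. first_pos w I = Some p \<or> last_pos w I = Some p)"
    using assms unfolding Boundary_def by simp
  then show ?thesis using that by fast
qed

lemma bnd_letter:
  assumes "cw Sig K w" "p \<in> Boundary K w"
  shows "\<exists>x\<in>w!p. x \<notin> Prop ` Sig"
  using assms(2)
proof (cases rule: bnd_cases)
  case 1
  have "Anch \<in> w!p" "Anch \<notin> Prop ` Sig" using 1 anch_pos_prop(1)[OF assms(1)] by auto
  then show ?thesis by blast
next
  case (2 I)
  have "Itv I \<in> w!p" using 2 first_pos_some(2)[of w I p] last_pos_some(2)[of w I p] by auto
  moreover have "Itv I \<notin> Prop ` Sig" by auto
  ultimately show ?thesis by blast
qed

lemma length_Norm [simp]: "length (Norm Sig K w) = length w"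
  by (simp add: Norm_def)

lemma nth_Norm: "p < length w \<Longrightarrow> Norm Sig K w ! p = (w ! p \<inter> (Prop ` Sig \<union> {Anch})) \<union>
       {Itv I | I. I \<in> K \<and> (first_pos w I = Some p \<or> last_pos w I = Some p)}"
  by (simp add: Norm_def)

lemma Norm_B:
  assumes "cw Sig K w" "p \<in> Boundary K w"
  shows "Norm Sig K w ! p = w ! p"
proof -
  have p: "p < length w" using Boundary_sub[OF assms(1)] assms(2) by auto
  have "w ! p \<subseteq> Norm Sig K w ! p"
  proof
    fix x assume x: "x \<in> w!p"
    show "x \<in> Norm Sig K w ! p"
    proof (cases "x \<in> Prop ` Sig \<union> {Anch}")
      case True then show ?thesis using x nth_Norm[OF p, of Sig K] by auto
    next
      case False
      then obtain I where I: "x = Itv I" "I \<in> K" using cw_sub[OF assms(1) p] x by auto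
      from assms(2) show ?thesis
      proof (cases rule: bnd_cases)
        case 1 then show ?thesis using anch_no_itv[OF assms(1) p] anch_pos_prop(1)[OF assms(1)] x I by auto
      next
        case (2 J)
        then have "Itv J \<in> w!p" using first_pos_some(2) last_pos_some(2) by metis
        then have "x = Itv J" using cw_uniq[OF assms(1) p x] False by auto
        then show ?thesis using 2 nth_Norm[OF p, of Sig K] by auto
      qed
    qed
  qed
  moreover have "Norm Sig K w ! p \<subseteq> w ! p"
  proof
    fix x assume "x \<in> Norm Sig K w ! p"
    then have "x \<in> w!p \<or> (\<exists>I. x = Itv I \<and> (first_pos w I = Some p \<or> last_pos w I = Some p))"
      using nth_Norm[OF p, of Sig K] by blast
    then show "x \<in> w!p" using first_pos_some(2) last_pos_some(2) by metis
  qed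
  ultimately show ?thesis by blast
qed

lemma Norm_nB:
  assumes "cw Sig K w" "p < length w" "p \<notin> Boundary K w"
  shows "Norm Sig K w ! p = w ! p \<inter> Prop ` Sig"
proof -
  have "p \<noteq> anch_pos w" using assms(3) unfolding Boundary_def by auto
  then have "Anch \<notin> w!p" using anch_pos_prop(2)[OF assms(1,2)] by auto
  moreover have "\<not> (I \<in> K \<and> (first_pos w I = Some p \<or> last_pos w I = Some p))" for I
    using assms(3) unfolding Boundary_def by auto
  ultimately show ?thesis using nth_Norm[OF assms(2)] by auto
qed


definition G0 :: "'p set \<Rightarrow> real set set \<Rightarrow> 'p sym list \<Rightarrow> nat \<Rightarrow> nat \<Rightarrow> 'p sym set \<Rightarrow> 'p sym set \<Rightarrow> bool" where
  "G0 Sig K seq i i1 a b \<longleftrightarrow> 1 \<le> i \<and> i \<le> length seq + 1 \<and>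
    ((i \<le> length seq \<and> seq!(i-1) \<in> a \<and> i1 = Suc i \<and> b = a) \<or>
     ((i \<le> length seq \<longrightarrow> seq!(i-1) \<notin> a) \<and> a \<subseteq> Prop ` Sig \<and> i1 = i \<and>
      (b = a \<or> (\<exists>I\<in>Kset K seq i. b = a \<union> {Itv I}))))"

lemma Kset_last: "Kset K seq (length seq + 1) = {}"
  unfolding Kset_def by auto

lemma Kset_sub: "Kset K seq i \<subseteq> K"
  unfolding Kset_def by auto

lemma step_char:
  "((q1,i1) \<in> delta_seq Sig K \<delta> seq (q,i) a) \<longleftrightarrow> (\<exists>b. q1 \<in> \<delta> q b \<and> G0 Sig K seq i i1 a b)"
proof (cases "1 \<le> i \<and> i \<le> length seq")
  case True
  then show ?thesis unfolding delta_seq_def G0_def Let_def by auto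
next
  case False
  show ?thesis
  proof (cases "i = length seq + 1")
    case True
    then show ?thesis unfolding delta_seq_def G0_def Let_def using Kset_last[of K seq] by auto
  next
    case False
    then show ?thesis using \<open>\<not> (1 \<le> i \<and> i \<le> length seq)\<close> unfolding delta_seq_def G0_def Let_def by auto
  qed
qed

lemma reach_char:
  "((q', j) \<in> reach (delta_seq Sig K \<delta> seq) (q, i) u) \<longleftrightarrow>
   (\<exists>w ix. length w = length u \<and> ix 0 = i \<and> ix (length u) = j \<and>
      (\<forall>p<length u. G0 Sig K seq (ix p) (ix (Suc p)) (u!p) (w!p)) \<and> q' \<in> reach \<delta> q w)"
proof (induction u arbitrary: q i)
  case Nil
  show ?case
  proof
    assume "(q', j) \<in> reach (delta_seq Sig K \<delta> seq) (q, i) []"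
    then show "\<exists>w ix. length w = length [] \<and> ix 0 = i \<and> ix (length []) = j \<and>
      (\<forall>p<length []. G0 Sig K seq (ix p) (ix (Suc p)) ([]!p) (w!p)) \<and> q' \<in> reach \<delta> q w"
    proof -
      assume "(q', j) \<in> reach (delta_seq Sig K \<delta> seq) (q, i) []"
      then have "q' = q" "j = i" by auto
      then show ?thesis by (intro exI[where x="[]"] exI[where x="\<lambda>_::nat. i"]) simp
    qed
  next
    assume "\<exists>w ix. length w = length [] \<and> ix 0 = i \<and> ix (length []) = j \<and>
      (\<forall>p<length []. G0 Sig K seq (ix p) (ix (Suc p)) ([]!p) (w!p)) \<and> q' \<in> reach \<delta> q w"
    then show "(q', j) \<in> reach (delta_seq Sig K \<delta> seq) (q, i) []" by auto
  qed
next
  case (Cons a u)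
  show ?case
  proof
    assume "(q', j) \<in> reach (delta_seq Sig K \<delta> seq) (q, i) (a # u)"
    then obtain q1 i1 where s: "(q1,i1) \<in> delta_seq Sig K \<delta> seq (q,i) a"
      and r: "(q', j) \<in> reach (delta_seq Sig K \<delta> seq) (q1, i1) u" by auto
    obtain b where b: "q1 \<in> \<delta> q b" "G0 Sig K seq i i1 a b" using s step_char by metis
    obtain w ix where w: "length w = length u" "ix 0 = i1" "ix (length u) = j"
      "\<forall>p<length u. G0 Sig K seq (ix p) (ix (Suc p)) (u!p) (w!p)" "q' \<in> reach \<delta> q1 w"
      using r Cons.IH by blast
    define ix' where "ix' = (\<lambda>p. case p of 0 \<Rightarrow> i | Suc p' \<Rightarrow> ix p')"
    have "\<forall>p<length (a#u). G0 Sig K seq (ix' p) (ix' (Suc p)) ((a#u)!p) ((b#w)!p)"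
    proof (intro allI impI)
      fix p assume "p < length (a#u)"
      then show "G0 Sig K seq (ix' p) (ix' (Suc p)) ((a#u)!p) ((b#w)!p)"
        using b w by (cases p) (auto simp: ix'_def)
    qed
    moreover have "q' \<in> reach \<delta> q (b#w)" using b w by auto
    ultimately show "\<exists>w ix. length w = length (a#u) \<and> ix 0 = i \<and> ix (length (a#u)) = j \<and>
      (\<forall>p<length (a#u). G0 Sig K seq (ix p) (ix (Suc p)) ((a#u)!p) (w!p)) \<and> q' \<in> reach \<delta> q w"
      using w by (intro exI[of _ "b#w"] exI[of _ ix']) (auto simp: ix'_def)
  next
    assume "\<exists>w ix. length w = length (a#u) \<and> ix 0 = i \<and> ix (length (a#u)) = j \<and>
      (\<forall>p<length (a#u). G0 Sig K seq (ix p) (ix (Suc p)) ((a#u)!p) (w!p)) \<and> q' \<in> reach \<delta> q w"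
    then obtain w ix where w: "length w = length (a#u)" "ix 0 = i" "ix (length (a#u)) = j"
      "\<forall>p<length (a#u). G0 Sig K seq (ix p) (ix (Suc p)) ((a#u)!p) (w!p)" "q' \<in> reach \<delta> q w"
      by blast
    obtain b w' where bw: "w = b # w'" using w(1) by (cases w) auto
    have g0: "G0 Sig K seq i (ix 1) a b" using w(4)[rule_format, of 0] w(2) bw by simp
    obtain q1 where q1: "q1 \<in> \<delta> q b" "q' \<in> reach \<delta> q1 w'" using w(5) bw by auto
    have "(q1, ix 1) \<in> delta_seq Sig K \<delta> seq (q,i) a" using step_char g0 q1(1) by metis
    moreover have "(q', j) \<in> reach (delta_seq Sig K \<delta> seq) (q1, ix 1) u"
      unfolding Cons.IH
      apply (rule exI[of _ w'], rule exI[of _ "\<lambda>p. ix (Suc p)"])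
      using w bw q1 by auto
    ultimately show "(q', j) \<in> reach (delta_seq Sig K \<delta> seq) (q, i) (a # u)" by auto
  qed
qed


lemma wtype_nth:
  assumes "cw Sig K w" "j < length (wtype Sig K w)"
  shows "sorted_list_of_set (Boundary K w) ! j \<in> Boundary K w"
    and "wtype Sig K w ! j = letter Sig w (sorted_list_of_set (Boundary K w) ! j)"
    and "wtype Sig K w ! j \<in> w ! (sorted_list_of_set (Boundary K w) ! j)"
    and "wtype Sig K w ! j \<notin> Prop ` Sig"
proof -
  let ?L = "sorted_list_of_set (Boundary K w)"
  have fin: "finite (Boundary K w)" using Boundary_fin[OF assms(1)] .
  have jl: "j < length ?L" using assms(2) by (simp add: wtype_letter)
  show mem: "?L ! j \<in> Boundary K w" using jl fin by (metis nth_mem set_sorted_list_of_set)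
  show eq: "wtype Sig K w ! j = letter Sig w (?L ! j)" using jl by (simp add: wtype_letter)
  have pl: "?L ! j < length w" using Boundary_sub[OF assms(1)] mem by auto
  obtain x where x: "x \<in> w ! (?L!j)" "x \<notin> Prop ` Sig" using bnd_letter[OF assms(1) mem] by blast
  have "letter Sig w (?L ! j) = x" using the_letter[OF assms(1) pl x] .
  then show "wtype Sig K w ! j \<in> w ! (?L ! j)" "wtype Sig K w ! j \<notin> Prop ` Sig" using eq x by auto
qed

lemma T1:
  assumes "is_type Sig K seq" "c \<in> set seq" shows "c \<notin> Prop ` Sig"
proof -
  obtain w where w: "cw Sig K w" "wtype Sig K w = seq" using assms(1) unfolding is_type_def by blast
  obtain j where "j < length seq" "seq ! j = c" using assms(2) by (metis in_set_conv_nth)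
  then show ?thesis using wtype_nth(4)[OF w(1), of j] w(2) by simp
qed

lemma T3:
  assumes "is_type Sig K seq" "a < b" "b < c" "c < length seq"
    "seq!a = Itv I" "seq!b = Itv I" "seq!c = Itv I"
  shows False
proof -
  obtain w where w: "cw Sig K w" "wtype Sig K w = seq" using assms(1) unfolding is_type_def by blast
  let ?L = "sorted_list_of_set (Boundary K w)"
  have fin: "finite (Boundary K w)" using Boundary_fin[OF w(1)] .
  have sL: "sorted_wrt (<) ?L" using fin by (simp add: strict_sorted_list_of_set)
  have len: "length ?L = length seq" using w(2) wtype_letter[of Sig K w] by (metis length_map)
  have ab: "?L!a < ?L!b" using sorted_wrt_nth_less[OF sL] assms len by simp
  have bc: "?L!b < ?L!c" using sorted_wrt_nth_less[OF sL] assms len by simp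
  have ia: "Itv I \<in> w ! (?L!a)" using wtype_nth(3)[OF w(1), of a] w(2) assms by simp
  have ib: "Itv I \<in> w ! (?L!b)" using wtype_nth(3)[OF w(1), of b] w(2) assms by simp
  have ic: "Itv I \<in> w ! (?L!c)" using wtype_nth(3)[OF w(1), of c] w(2) assms by simp
  have bB: "?L!b \<in> Boundary K w" using wtype_nth(1)[OF w(1), of b] w(2) assms by simp
  have cl: "?L!c < length w" using wtype_nth(1)[OF w(1), of c] w(2) assms Boundary_sub[OF w(1)] by auto
  have bl: "?L!b < length w" using bB Boundary_sub[OF w(1)] by auto
  from bB show False
  proof (cases rule: bnd_cases)
    case 1 then show False using anch_no_itv[OF w(1) bl] anch_pos_prop(1)[OF w(1)] ib by auto
  next
    case (2 J)
    then have "Itv J \<in> w ! (?L!b)" using first_pos_some(2) last_pos_some(2) by metis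
    then have "J = I" using cw_uniq[OF w(1) bl _ ib] by auto
    then show False using 2 first_pos_some(3)[of w I "?L!b" "?L!a"] last_pos_some(3)[of w I "?L!b" "?L!c"]
      ab bc ia ic cl by auto
  qed
qed

lemma ix_card:
  fixes ix :: "nat \<Rightarrow> nat"
  assumes "ix 0 = 1" "\<forall>p<n. ix (Suc p) = ix p \<or> ix (Suc p) = Suc (ix p)"
  shows "p \<le> n \<Longrightarrow> ix p = 1 + card {q. q < n \<and> ix (Suc q) = Suc (ix q) \<and> q < p}"
proof (induction p)
  case 0 then show ?case using assms(1) by simp
next
  case (Suc p)
  have pn: "p < n" using Suc.prems by simp
  show ?case
  proof (cases "ix (Suc p) = Suc (ix p)")
    case True
    have "{q. q < n \<and> ix (Suc q) = Suc (ix q) \<and> q < Suc p} = insert p {q. q < n \<and> ix (Suc q) = Suc (ix q) \<and> q < p}"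
      using True pn by auto
    then show ?thesis using Suc True pn by simp
  next
    case False
    have "{q. q < n \<and> ix (Suc q) = Suc (ix q) \<and> q < Suc p} = {q. q < n \<and> ix (Suc q) = Suc (ix q) \<and> q < p}"
      using False pn less_Suc_eq by auto
    then show ?thesis using Suc False pn assms(2) by auto
  qed
qed


locale srun =
  fixes Sig :: "'p set" and K :: "real set set" and seq :: "'p sym list"
    and u w :: "'p sym set list" and ix :: "nat \<Rightarrow> nat"
  assumes ty: "is_type Sig K seq" and cw: "cw Sig K w" and len: "length w = length u"
    and ix0: "ix 0 = 1" and ixn: "ix (length u) = length seq + 1"
    and G: "\<And>p. p < length u \<Longrightarrow> G0 Sig K seq (ix p) (ix (Suc p)) (u!p) (w!p)"
begin

definition P where "P = {q. q < length u \<and> ix (Suc q) = Suc (ix q)}"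

lemma steps: "\<forall>p<length u. ix (Suc p) = ix p \<or> ix (Suc p) = Suc (ix p)"
proof (intro allI impI)
  fix p assume "p < length u"
  then have "G0 Sig K seq (ix p) (ix (Suc p)) (u!p) (w!p)" by (rule G)
  then show "ix (Suc p) = ix p \<or> ix (Suc p) = Suc (ix p)" unfolding G0_def by argo
qed

lemma ixc: "p \<le> length u \<Longrightarrow> ix p = 1 + card {q\<in>P. q<p}"
proof -
  assume p: "p \<le> length u"
  have "{q\<in>P. q<p} = {q. q < length u \<and> ix (Suc q) = Suc (ix q) \<and> q < p}" unfolding P_def by auto
  then show ?thesis using ix_card[OF ix0 steps p] by simp
qed

lemma finP: "finite P" unfolding P_def by auto
lemma Psub: "P \<subseteq> {..<length u}" unfolding P_def by auto

lemma cardP: "card P = length seq"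
proof -
  have "{q\<in>P. q<length u} = P" unfolding P_def by blast
  moreover have "ix (length u) = 1 + card {q\<in>P. q<length u}" using ixc[of "length u"] by simp
  ultimately show ?thesis using ixn by simp
qed

lemma mono: "p \<le> p' \<Longrightarrow> p' \<le> length u \<Longrightarrow> ix p \<le> ix p'"
proof -
  assume a: "p \<le> p'" "p' \<le> length u"
  have "card {q\<in>P. q<p} \<le> card {q\<in>P. q<p'}" using a finP by (intro card_mono) auto
  moreover have "ix p = 1 + card {q\<in>P. q<p}" using ixc a by simp
  moreover have "ix p' = 1 + card {q\<in>P. q<p'}" using ixc a by simp
  ultimately show ?thesis by linarith
qed

lemma strict: "q \<in> P \<Longrightarrow> q < p' \<Longrightarrow> p' \<le> length u \<Longrightarrow> Suc (ix q) \<le> ix p'"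
  using mono[of "Suc q" p'] unfolding P_def by auto

lemma rng: "p \<le> length u \<Longrightarrow> 1 \<le> ix p \<and> ix p \<le> length seq + 1"
  using ixc mono[of p "length u"] ixn by auto

lemma G_step: "p \<in> P \<Longrightarrow> ix p \<le> length seq \<and> seq!(ix p - 1) \<in> u!p \<and> w!p = u!p"
  using G[of p] unfolding P_def G0_def by auto

lemma G_stay: "p < length u \<Longrightarrow> p \<notin> P \<Longrightarrow> u!p \<subseteq> Prop ` Sig \<and> ix (Suc p) = ix p \<and>
   (w!p = u!p \<or> (\<exists>I\<in>Kset K seq (ix p). w!p = u!p \<union> {Itv I}))"
  using G[of p] unfolding P_def G0_def by auto

abbreviation "L \<equiv> sorted_list_of_set P"

lemma L_ix: "k < length seq \<Longrightarrow> L!k \<in> P \<and> ix (L!k) = Suc k"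
proof -
  assume k: "k < length seq"
  have lenL: "length L = length seq" using cardP by simp
  have mem: "L!k \<in> P" using k lenL finP by (metis nth_mem set_sorted_list_of_set)
  let ?q = "L!k"
  have ql: "?q \<le> length u" using mem Psub by auto
  have e1: "L ! card {q'\<in>P. q'<?q} = ?q" using nth_sorted_card[OF finP mem] .
  have "{q'\<in>P. q'<?q} \<subset> P" using mem by auto
  then have "card {q'\<in>P. q'<?q} < length seq" using cardP finP psubset_card_mono by metis
  then have "card {q'\<in>P. q'<?q} = k"
    using e1 k lenL distinct_sorted_list_of_set[of P] nth_eq_iff_index_eq by metis
  then show ?thesis using mem ixc[OF ql] by simp
qed

lemma ex_pos: "1 \<le> k \<Longrightarrow> k \<le> length seq \<Longrightarrow> \<exists>q\<in>P. ix q = k"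
  using L_ix[of "k - 1"] by (metis Suc_diff_1 Suc_le_eq le_less_trans less_one not_less)

lemma seq_at: "q \<in> P \<Longrightarrow> seq!(ix q - 1) \<in> w!q \<and> seq!(ix q - 1) \<notin> Prop ` Sig"
proof -
  assume q: "q \<in> P"
  have "ix q - 1 < length seq" using G_step[OF q] rng[of q] q Psub by auto
  then have "seq!(ix q - 1) \<in> set seq" by simp
  then show ?thesis using T1[OF ty] G_step[OF q] by auto
qed

lemma itv_notprop: "Itv I \<notin> Prop ` Sig" by auto

lemma OCC:
  assumes p: "p < length u" and I: "Itv I \<in> w!p"
  shows "\<exists>a<length seq. seq!a = Itv I \<and> a < ix p \<and> (p \<notin> P \<longrightarrow> Suc a < ix p)"
    and "\<exists>b<length seq. seq!b = Itv I \<and> ix p \<le> Suc b"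
proof -
  have "(\<exists>a<length seq. seq!a = Itv I \<and> a < ix p \<and> (p \<notin> P \<longrightarrow> Suc a < ix p)) \<and>
        (\<exists>b<length seq. seq!b = Itv I \<and> ix p \<le> Suc b)"
  proof (cases "p \<in> P")
    case True
    have pw: "p < length w" using p len by simp
    have "seq!(ix p - 1) = Itv I" using seq_at[OF True] cw_uniq[OF cw pw _ I] itv_notprop by blast
    moreover have "1 \<le> ix p" "ix p \<le> length seq" using rng[of p] p G_step[OF True] by auto
    ultimately show ?thesis using True by (intro conjI exI[of _ "ix p - 1"]) auto
  next
    case False
    have st: "u!p \<subseteq> Prop ` Sig" "w!p = u!p \<or> (\<exists>I\<in>Kset K seq (ix p). w!p = u!p \<union> {Itv I})"
      using G_stay[OF p False] by auto
    have "Itv I \<notin> u!p" using st(1) itv_notprop by blast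
    then obtain J where J: "J \<in> Kset K seq (ix p)" "w!p = u!p \<union> {Itv J}" using st(2) I by auto
    then have "J = I" using I \<open>Itv I \<notin> u!p\<close> by auto
    then obtain i' i'' where ii: "1 \<le> i'" "i' < ix p" "ix p \<le> i''" "i'' \<le> length seq"
      "seq ! (i' - 1) = Itv I" "seq ! (i'' - 1) = Itv I" using J(1) unfolding Kset_def by blast
    show ?thesis
    proof (intro conjI)
      show "\<exists>a<length seq. seq!a = Itv I \<and> a < ix p \<and> (p \<notin> P \<longrightarrow> Suc a < ix p)"
        using ii by (intro exI[of _ "i' - 1"]) auto
      show "\<exists>b<length seq. seq!b = Itv I \<and> ix p \<le> Suc b"
        using ii by (intro exI[of _ "i'' - 1"]) auto
    qed
  qed
  then show "\<exists>a<length seq. seq!a = Itv I \<and> a < ix p \<and> (p \<notin> P \<longrightarrow> Suc a < ix p)"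
    and "\<exists>b<length seq. seq!b = Itv I \<and> ix p \<le> Suc b" by auto
qed


lemma P_sub_B: "P \<subseteq> Boundary K w"
proof
  fix q assume q: "q \<in> P"
  have qn: "q < length u" and qw: "q < length w" using q Psub len by auto
  define c where "c = seq!(ix q - 1)"
  have c: "c \<in> w!q" "c \<notin> Prop ` Sig" using seq_at[OF q] c_def by auto
  have "c \<in> Prop ` Sig \<union> Itv ` K \<union> {Anch}" using cw_sub[OF cw qw] c(1) by blast
  then have "c = Anch \<or> (\<exists>I\<in>K. c = Itv I)" using c(2) by blast
  then show "q \<in> Boundary K w"
  proof
    assume "c = Anch"
    then have "q = anch_pos w" using anch_pos_prop(2)[OF cw qw] c(1) by simp
    then show ?thesis unfolding Boundary_def by simp
  next
    assume "\<exists>I\<in>K. c = Itv I"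
    then obtain I where I: "I \<in> K" "c = Itv I" by blast
    obtain f where f: "first_pos w I = Some f" "f \<le> q" using first_pos_ex[OF qw] c(1) I by metis
    obtain l where l: "last_pos w I = Some l" "q \<le> l" using last_pos_ex[OF qw] c(1) I by metis
    show ?thesis
    proof (rule ccontr)
      assume nb: "q \<notin> Boundary K w"
      have "f \<noteq> q" "l \<noteq> q" using nb f l I unfolding Boundary_def by auto
      then have fq: "f < q" and ql: "q < l" using f l by auto
      have fl: "f < length u" "l < length u" using first_pos_some(1)[OF f(1)] last_pos_some(1)[OF l(1)] len by auto
      have If: "Itv I \<in> w!f" "Itv I \<in> w!l" using first_pos_some(2)[OF f(1)] last_pos_some(2)[OF l(1)] by auto
      obtain a where a: "a < length seq" "seq!a = Itv I" "a < ix f" "f \<notin> P \<longrightarrow> Suc a < ix f"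
        using OCC(1)[OF fl(1) If(1)] by blast
      obtain b where b: "b < length seq" "seq!b = Itv I" "ix l \<le> Suc b"
        using OCC(2)[OF fl(2) If(2)] by blast
      have ixq: "1 \<le> ix q" "ix q \<le> length seq" using rng[of q] qn G_step[OF q] by auto
      have "ix f \<le> ix q" using mono[of f q] fq qn by simp
      have "a < ix q - 1"
      proof (cases "f \<in> P")
        case True
        then have "Suc (ix f) \<le> ix q" using strict[of f q] fq qn by simp
        then show ?thesis using a(3) by simp
      next
        case False
        then show ?thesis using a(4) \<open>ix f \<le> ix q\<close> by simp
      qed
      moreover have "ix q - 1 < b"
      proof -
        have "Suc (ix q) \<le> ix l" using strict[OF q ql] fl by simp
        then show ?thesis using b(3) ixq by simp
      qed
      moreover have "seq!(ix q - 1) = Itv I" using I c_def by simp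
      ultimately show False using T3[OF ty, of a "ix q - 1" b I] a b by simp
    qed
  qed
qed

lemma B_sub_P: "Boundary K w \<subseteq> P"
proof
  fix p assume pB: "p \<in> Boundary K w"
  have pw: "p < length w" using pB Boundary_sub[OF cw] by auto
  then have pn: "p < length u" using len by simp
  show "p \<in> P"
  proof (rule ccontr)
    assume nP: "p \<notin> P"
    have st: "u!p \<subseteq> Prop ` Sig" "w!p = u!p \<or> (\<exists>I\<in>Kset K seq (ix p). w!p = u!p \<union> {Itv I})"
      using G_stay[OF pn nP] by auto
    from pB show False
    proof (cases rule: bnd_cases)
      case 1
      then have "Anch \<in> w!p" using anch_pos_prop(1)[OF cw] by simp
      moreover have "Anch \<notin> u!p" using st(1) by auto
      ultimately show False using st(2) by auto
    next
      case (2 I)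
      from 2(2) show False
      proof
        assume f: "first_pos w I = Some p"
        have Ip: "Itv I \<in> w!p" using first_pos_some(2)[OF f] .
        obtain a where a: "a < length seq" "seq!a = Itv I" "Suc a < ix p"
          using OCC(1)[OF pn Ip] nP by blast
        obtain q where q: "q \<in> P" "ix q = Suc a" using ex_pos[of "Suc a"] a by auto
        have "q < p"
        proof (rule ccontr)
          assume "\<not> q < p"
          then have "ix p \<le> ix q" using mono[of p q] q Psub by auto
          then show False using q a by simp
        qed
        moreover have "Itv I \<in> w!q" using seq_at[OF q(1)] q(2) a(2) by simp
        ultimately show False using first_pos_some(3)[OF f] by blast
      next
        assume l: "last_pos w I = Some p"
        have Ip: "Itv I \<in> w!p" using last_pos_some(2)[OF l] .
        obtain b where b: "b < length seq" "seq!b = Itv I" "ix p \<le> Suc b"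
          using OCC(2)[OF pn Ip] by blast
        obtain q where q: "q \<in> P" "ix q = Suc b" using ex_pos[of "Suc b"] b by auto
        have "q \<noteq> p" using q nP by auto
        have "p < q"
        proof (rule ccontr)
          assume "\<not> p < q"
          then have "q < p" using \<open>q \<noteq> p\<close> by simp
          then have "Suc (ix q) \<le> ix p" using strict[OF q(1)] pn by simp
          then show False using q b by simp
        qed
        moreover have "Itv I \<in> w!q" using seq_at[OF q(1)] q(2) b(2) by simp
        moreover have "q < length w" using q Psub len by auto
        ultimately show False using last_pos_some(3)[OF l] by blast
      qed
    qed
  qed
qed

lemma B_eq: "Boundary K w = P" using P_sub_B B_sub_P by blast

lemma wtype_eq: "wtype Sig K w = seq"
proof -
  have "wtype Sig K w = map (letter Sig w) L" using wtype_letter[of Sig K w] B_eq by simp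
  also have "\<dots> = seq"
  proof (rule nth_equalityI)
    show "length (map (letter Sig w) L) = length seq" using cardP by simp
    fix k assume "k < length (map (letter Sig w) L)"
    then have k: "k < length seq" using cardP by simp
    have q: "L!k \<in> P" "ix (L!k) = Suc k" using L_ix[OF k] by auto
    have qw: "L!k < length w" using q Psub len by auto
    have "letter Sig w (L!k) = seq!k" using the_letter[OF cw qw] seq_at[OF q(1)] q(2) by simp
    then show "map (letter Sig w) L ! k = seq ! k" using k cardP by simp
  qed
  finally show ?thesis .
qed

lemma Norm_eq: "Norm Sig K w = u"
proof (rule nth_equalityI)
  show "length (Norm Sig K w) = length u" using len by simp
  fix p assume "p < length (Norm Sig K w)"
  then have pn: "p < length u" and pw: "p < length w" using len by auto
  show "Norm Sig K w ! p = u ! p"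
  proof (cases "p \<in> P")
    case True
    then show ?thesis using Norm_B[OF cw] B_eq G_step by simp
  next
    case False
    have st: "u!p \<subseteq> Prop ` Sig" "w!p = u!p \<or> (\<exists>I\<in>Kset K seq (ix p). w!p = u!p \<union> {Itv I})"
      using G_stay[OF pn False] by auto
    have "w ! p \<inter> Prop ` Sig = u!p" using st by auto
    then show ?thesis using Norm_nB[OF cw pw] False B_eq by simp
  qed
qed

end

lemma sup_dir:
  assumes cw: "cw Sig K w" and wt: "wtype Sig K w = seq"
  shows "\<exists>ix. ix 0 = 1 \<and> ix (length w) = length seq + 1 \<and>
           (\<forall>p<length w. G0 Sig K seq (ix p) (ix (Suc p)) (Norm Sig K w ! p) (w!p))"
proof -
  define B where "B = Boundary K w"
  have fin: "finite B" using Boundary_fin[OF cw] B_def by simp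
  have Bsub: "B \<subseteq> {..<length w}" using Boundary_sub[OF cw] B_def by simp
  have ty: "is_type Sig K seq" using cw wt unfolding is_type_def by blast
  have m: "length seq = card B" using wt wtype_letter[of Sig K w] B_def by (metis length_map length_sorted_list_of_set)
  define ix where "ix = (\<lambda>p. 1 + card {b\<in>B. b<p})"
  have hB: "card {x\<in>B. x<b} < card B \<and> seq!(card {x\<in>B. x<b}) = letter Sig w b" if b: "b \<in> B" for b
  proof
    have "{x\<in>B. x<b} \<subset> B" using b by auto
    then show lt: "card {x\<in>B. x<b} < card B" using fin psubset_card_mono by metis
    have "seq!(card {x\<in>B. x<b}) = letter Sig w (sorted_list_of_set B ! card {x\<in>B. x<b})"
      using wt[symmetric] wtype_letter[of Sig K w] B_def lt fin by simp
    then show "seq!(card {x\<in>B. x<b}) = letter Sig w b" using nth_sorted_card[OF fin b] by simp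
  qed
  have ixB: "ix b \<le> length seq \<and> seq!(ix b - 1) = letter Sig w b" if "b \<in> B" for b
    using hB[OF that] m unfolding ix_def by simp
  have letB: "letter Sig w b \<in> w!b" if "b \<in> B" for b
  proof -
    have bw: "b < length w" using that Bsub by auto
    have "b \<in> Boundary K w" using that B_def by simp
    then obtain x where "x \<in> w!b" "x \<notin> Prop ` Sig" using bnd_letter[OF cw] by blast
    then show ?thesis using the_letter[OF cw bw] by simp
  qed
  have ix0: "ix 0 = 1" unfolding ix_def by simp
  have ixn: "ix (length w) = length seq + 1"
  proof -
    have "{b\<in>B. b<length w} = B" using Bsub by auto
    then show ?thesis unfolding ix_def using m by simp
  qed
  have cle: "card {b\<in>B. b<p} \<le> card B" for p using fin by (intro card_mono) auto
  have G: "G0 Sig K seq (ix p) (ix (Suc p)) (Norm Sig K w ! p) (w!p)" if pw: "p < length w" for p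
  proof (cases "p \<in> B")
    case True
    have N: "Norm Sig K w ! p = w ! p" using Norm_B[OF cw] True B_def by simp
    have "{b\<in>B. b<Suc p} = insert p {b\<in>B. b<p}" using True by auto
    then have s: "ix (Suc p) = Suc (ix p)" unfolding ix_def using fin by simp
    show ?thesis unfolding G0_def using ixB[OF True] letB[OF True] N s
      by (simp add: ix_def)
  next
    case False
    have N: "Norm Sig K w ! p = w ! p \<inter> Prop ` Sig" using Norm_nB[OF cw pw] False B_def by simp
    have "{b\<in>B. b<Suc p} = {b\<in>B. b<p}" using False less_Suc_eq by auto
    then have s: "ix (Suc p) = ix p" unfolding ix_def by simp
    have r: "1 \<le> ix p" "ix p \<le> length seq + 1" unfolding ix_def using cle[of p] m by auto
    have notin: "ix p \<le> length seq \<longrightarrow> seq!(ix p - 1) \<notin> Norm Sig K w ! p"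
    proof
      assume "ix p \<le> length seq"
      then have "seq!(ix p - 1) \<in> set seq" using r by simp
      then show "seq!(ix p - 1) \<notin> Norm Sig K w ! p" using T1[OF ty] N by auto
    qed
    have wp: "w!p = Norm Sig K w ! p \<or> (\<exists>I\<in>Kset K seq (ix p). w!p = Norm Sig K w ! p \<union> {Itv I})"
    proof (cases "\<exists>x\<in>w!p. x \<notin> Prop ` Sig")
      case False
      then show ?thesis using N by auto
    next
      case True
      then obtain x where x: "x \<in> w!p" "x \<notin> Prop ` Sig" by blast
      have "p \<noteq> anch_pos w" using False B_def unfolding Boundary_def by simp
      then have "x \<noteq> Anch" using anch_pos_prop(2)[OF cw pw] x by auto
      then obtain I where I: "I \<in> K" "x = Itv I" using cw_sub[OF cw pw] x by auto
      have weq: "w!p = Norm Sig K w ! p \<union> {Itv I}"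
      proof
        show "w ! p \<subseteq> Norm Sig K w ! p \<union> {Itv I}"
          using N cw_uniq[OF cw pw _ x(1) _ x(2)] I by auto
        show "Norm Sig K w ! p \<union> {Itv I} \<subseteq> w ! p" using N x I by auto
      qed
      obtain f where f: "first_pos w I = Some f" "f \<le> p" using first_pos_ex[OF pw] x I by metis
      obtain l where l: "last_pos w I = Some l" "p \<le> l" using last_pos_ex[OF pw] x I by metis
      have fB: "f \<in> B" using f I B_def unfolding Boundary_def by auto
      have lB: "l \<in> B" using l I B_def unfolding Boundary_def by auto
      have "f \<noteq> p" "l \<noteq> p" using fB lB False by auto
      then have fp: "f < p" and pl: "p < l" using f l by auto
      have "{b\<in>B. b<f} \<subset> {b\<in>B. b<p}" using fB fp by auto
      then have i1: "ix f < ix p" unfolding ix_def using fin psubset_card_mono[of "{b\<in>B. b<p}"] by simp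
      have "card {b\<in>B. b<p} \<le> card {b\<in>B. b<l}" using fin pl by (intro card_mono) auto
      then have i2: "ix p \<le> ix l" unfolding ix_def by simp
      have inp: "Itv I \<notin> Prop ` Sig" by auto
      have sf: "seq!(ix f - 1) = Itv I"
        using inp ixB[OF fB] the_letter[OF cw _ first_pos_some(2)[OF f(1)]] first_pos_some(1)[OF f(1)] by simp
      have sl: "seq!(ix l - 1) = Itv I"
        using inp ixB[OF lB] the_letter[OF cw _ last_pos_some(2)[OF l(1)]] last_pos_some(1)[OF l(1)] by simp
      have "I \<in> Kset K seq (ix p)"
        unfolding Kset_def using I(1) i1 i2 ixB[OF lB] sf sl
        by (intro CollectI conjI exI[of _ "ix f"] exI[of _ "ix l"]) (auto simp: ix_def)
      then show ?thesis using weq by blast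
    qed
    show ?thesis unfolding G0_def using r notin N s wp by auto
  qed
  show ?thesis using ix0 ixn G by blast
qed

lemma Norm_lists:
  assumes "cw Sig K w"
  shows "Norm Sig K w \<in> lists (alphabet Sig K)"
proof -
  have "Norm Sig K w ! p \<in> alphabet Sig K" if p: "p < length w" for p
  proof -
    have "w!p \<subseteq> Prop ` Sig \<union> Itv ` K \<union> {Anch}" using cw_sub[OF assms p] .
    then show ?thesis unfolding alphabet_def using nth_Norm[OF p, of Sig K] by auto
  qed
  then show ?thesis by (auto simp: in_set_conv_nth)
qed

theorem lemma2:
  fixes Sig :: "'p set" and K :: "real set set" and Q :: "'q set" and init :: 'q
    and \<delta> :: "'q \<Rightarrow> 'p sym set \<Rightarrow> 'q set" and F :: "'q set"
  assumes "finite Sig" and "finite K" and "K \<subseteq> I_int"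
    and "is_nfa Q init (alphabet Sig K) \<delta> F"
    and "lang (alphabet Sig K) init \<delta> F \<subseteq> {w. cw Sig K w}"
  shows "(\<forall>seq. is_type Sig K seq \<longrightarrow>
            lang (alphabet Sig K) (init, 1) (delta_seq Sig K \<delta> seq) (F \<times> {length seq + 1})
            = Norm Sig K ` (lang (alphabet Sig K) init \<delta> F \<inter> W_seq Sig K seq))
       \<and> (\<Union>seq\<in>{seq. is_type Sig K seq}.
            lang (alphabet Sig K) (init, 1) (delta_seq Sig K \<delta> seq) (F \<times> {length seq + 1}))
         = Norm Sig K ` lang (alphabet Sig K) init \<delta> F"
proof -
  let ?A = "alphabet Sig K"
  let ?LA = "lang ?A init \<delta> F"
  have part1: "lang ?A (init, 1) (delta_seq Sig K \<delta> seq) (F \<times> {length seq + 1})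
            = Norm Sig K ` (?LA \<inter> W_seq Sig K seq)" if ty: "is_type Sig K seq" for seq
  proof
    show "lang ?A (init, 1) (delta_seq Sig K \<delta> seq) (F \<times> {length seq + 1})
            \<subseteq> Norm Sig K ` (?LA \<inter> W_seq Sig K seq)"
    proof
      fix u assume "u \<in> lang ?A (init, 1) (delta_seq Sig K \<delta> seq) (F \<times> {length seq + 1})"
      then have ul: "u \<in> lists ?A" and
        "reach (delta_seq Sig K \<delta> seq) (init, 1) u \<inter> (F \<times> {length seq + 1}) \<noteq> {}"
        unfolding lang_def by auto
      then obtain q' where q': "q' \<in> F" "(q', length seq + 1) \<in> reach (delta_seq Sig K \<delta> seq) (init, 1) u"
        by auto
      obtain w ix where w: "length w = length u" "ix 0 = 1" "ix (length u) = length seq + 1"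
        "\<forall>p<length u. G0 Sig K seq (ix p) (ix (Suc p)) (u!p) (w!p)" "q' \<in> reach \<delta> init w"
        using q'(2) unfolding reach_char by blast
      have "w ! p \<in> ?A" if p: "p < length w" for p
      proof -
        have "\<forall>x\<in>set u. x \<in> ?A" using ul by auto
        then have up: "u!p \<in> ?A" using p w(1) by (metis nth_mem)
        have "w!p = u!p \<or> (\<exists>I\<in>Kset K seq (ix p). w!p = u!p \<union> {Itv I})"
          using w(4) p w(1) unfolding G0_def by auto
        moreover have "u!p \<subseteq> Prop ` Sig \<union> Itv ` K \<union> {Anch}" using up unfolding alphabet_def by simp
        ultimately have "w!p \<subseteq> Prop ` Sig \<union> Itv ` K \<union> {Anch}" using Kset_sub[of K seq "ix p"] by blast
        then show ?thesis unfolding alphabet_def by simp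
      qed
      then have wl: "w \<in> lists ?A" by (auto simp: in_set_conv_nth)
      have wL: "w \<in> ?LA" unfolding lang_def using wl w(5) q'(1) by auto
      then have cww: "cw Sig K w" using assms(5) by auto
      interpret srun Sig K seq u w ix
        using ty cww w by unfold_locales auto
      have "w \<in> W_seq Sig K seq" unfolding W_seq_def using cww wtype_eq by simp
      then show "u \<in> Norm Sig K ` (?LA \<inter> W_seq Sig K seq)" using wL Norm_eq by force
    qed
    show "Norm Sig K ` (?LA \<inter> W_seq Sig K seq)
          \<subseteq> lang ?A (init, 1) (delta_seq Sig K \<delta> seq) (F \<times> {length seq + 1})"
    proof
      fix u assume "u \<in> Norm Sig K ` (?LA \<inter> W_seq Sig K seq)"
      then obtain w where u: "u = Norm Sig K w" and wL: "w \<in> ?LA" and wW: "w \<in> W_seq Sig K seq" by blast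
      have cww: "cw Sig K w" and wt: "wtype Sig K w = seq" using wW unfolding W_seq_def by auto
      obtain q' where q': "q' \<in> F" "q' \<in> reach \<delta> init w" using wL unfolding lang_def by auto
      obtain ix where ix: "ix 0 = 1" "ix (length w) = length seq + 1"
        "\<forall>p<length w. G0 Sig K seq (ix p) (ix (Suc p)) (Norm Sig K w ! p) (w!p)"
        using sup_dir[OF cww wt] by blast
      have "(q', length seq + 1) \<in> reach (delta_seq Sig K \<delta> seq) (init, 1) u"
        unfolding reach_char using ix q' u by (intro exI[of _ w] exI[of _ ix]) auto
      moreover have "u \<in> lists ?A" using Norm_lists[OF cww] u by simp
      ultimately show "u \<in> lang ?A (init, 1) (delta_seq Sig K \<delta> seq) (F \<times> {length seq + 1})"
        unfolding lang_def using q'(1) by auto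
    qed
  qed
  have part2: "(\<Union>seq\<in>{seq. is_type Sig K seq}.
            lang ?A (init, 1) (delta_seq Sig K \<delta> seq) (F \<times> {length seq + 1}))
         = Norm Sig K ` ?LA"
  proof
    show "(\<Union>seq\<in>{seq. is_type Sig K seq}.
            lang ?A (init, 1) (delta_seq Sig K \<delta> seq) (F \<times> {length seq + 1})) \<subseteq> Norm Sig K ` ?LA"
      using part1 by blast
    show "Norm Sig K ` ?LA \<subseteq> (\<Union>seq\<in>{seq. is_type Sig K seq}.
            lang ?A (init, 1) (delta_seq Sig K \<delta> seq) (F \<times> {length seq + 1}))"
    proof
      fix u assume "u \<in> Norm Sig K ` ?LA"
      then obtain w where u: "u = Norm Sig K w" and wL: "w \<in> ?LA" by blast
      have cww: "cw Sig K w" using wL assms(5) by auto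
      have ty: "is_type Sig K (wtype Sig K w)" unfolding is_type_def using cww by blast
      have "w \<in> W_seq Sig K (wtype Sig K w)" unfolding W_seq_def using cww by simp
      then have "u \<in> lang ?A (init, 1) (delta_seq Sig K \<delta> (wtype Sig K w)) (F \<times> {length (wtype Sig K w) + 1})"
        using part1[OF ty] u wL by blast
      then show "u \<in> (\<Union>seq\<in>{seq. is_type Sig K seq}.
            lang ?A (init, 1) (delta_seq Sig K \<delta> seq) (F \<times> {length seq + 1}))" using ty by blast
    qed
  qed
  show ?thesis using part1 part2 by blast
qed

end
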